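(* Let $G$ be a checkerboard-colored graph cellularly embedded on the torus, with faces colored red and blue. Let $k_r$ and $k_b$ be the total number of red faces and of blue faces respectively. Suppose each vertex of $G$ is incident to an odd number of red faces and an odd number of blue faces. If $G$ contains an A-trail, then $k_r$ is odd or $k_b$ is odd.
   Context: A checkerboard coloring of an embedded graph is a proper 2-coloring (red/blue) of its faces, i.e. faces sharing an edge receive different colors. A transition at a vertex is a partition of its half-edges into pairs; it is smooth if it only pairs half-edges adjacent in the cyclic rotation at the vertex. An A-trail is an Eulerian circuit all of whose induced transitions (pairing consecutively traversed half-edges) are smooth. *)

theory Defs
  imports Main
begin

text \<open>Cellularly embedded graphs on orientable surfaces are represented combinatorially
by rotation systems (combinatorial maps): a finite set D of darts (half-edges),
a fixed-point-free involution alpha pairing the two half-edges of each edge, and a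
permutation sigma of D giving the cyclic rotation of half-edges around each vertex.
Vertices are the sigma-orbits, edges the alpha-orbits, faces the orbits of sigma o alpha
(Heffter--Edmonds).  The surface is the torus iff the map is connected and
V - E + F = 0.\<close>

definition orb :: "('a \<Rightarrow> 'a) \<Rightarrow> 'a \<Rightarrow> 'a set" where
  "orb f x = {(f ^^ n) x | n. True}"

definition vertex_of :: "('a \<Rightarrow> 'a) \<Rightarrow> 'a \<Rightarrow> 'a set" where
  "vertex_of \<sigma> d = orb \<sigma> d"

definition face_of :: "('a \<Rightarrow> 'a) \<Rightarrow> ('a \<Rightarrow> 'a) \<Rightarrow> 'a \<Rightarrow> 'a set" where
  "face_of \<alpha> \<sigma> d = orb (\<sigma> \<circ> \<alpha>) d"

definition edge_of :: "('a \<Rightarrow> 'a) \<Rightarrow> 'a \<Rightarrow> 'a set" where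
  "edge_of \<alpha> d = {d, \<alpha> d}"

definition vertices :: "'a set \<Rightarrow> ('a \<Rightarrow> 'a) \<Rightarrow> 'a set set" where
  "vertices D \<sigma> = vertex_of \<sigma> ` D"

definition edges :: "'a set \<Rightarrow> ('a \<Rightarrow> 'a) \<Rightarrow> 'a set set" where
  "edges D \<alpha> = edge_of \<alpha> ` D"

definition faces :: "'a set \<Rightarrow> ('a \<Rightarrow> 'a) \<Rightarrow> ('a \<Rightarrow> 'a) \<Rightarrow> 'a set set" where
  "faces D \<alpha> \<sigma> = face_of \<alpha> \<sigma> ` D"

definition rotation_system :: "'a set \<Rightarrow> ('a \<Rightarrow> 'a) \<Rightarrow> ('a \<Rightarrow> 'a) \<Rightarrow> bool" where
  "rotation_system D \<alpha> \<sigma> \<longleftrightarrow>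
     finite D \<and> D \<noteq> {} \<and>
     (\<forall>d\<in>D. \<alpha> d \<in> D \<and> \<alpha> d \<noteq> d \<and> \<alpha> (\<alpha> d) = d) \<and>
     bij_betw \<sigma> D D \<and>
     (\<forall>x\<in>D. \<forall>y\<in>D. (x, y) \<in> ({(d, \<sigma> d) | d. d \<in> D} \<union> {(d, \<alpha> d) | d. d \<in> D})\<^sup>*)"

definition torus_map :: "'a set \<Rightarrow> ('a \<Rightarrow> 'a) \<Rightarrow> ('a \<Rightarrow> 'a) \<Rightarrow> bool" where
  "torus_map D \<alpha> \<sigma> \<longleftrightarrow> rotation_system D \<alpha> \<sigma> \<and>
     int (card (vertices D \<sigma>)) - int (card (edges D \<alpha>)) + int (card (faces D \<alpha> \<sigma>)) = 0"

text \<open>Checkerboard colouring: red F true = face F is red, false = blue.  The two sides of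
the edge {d, alpha d} are the faces of d and of alpha d.\<close>
definition checkerboard :: "'a set \<Rightarrow> ('a \<Rightarrow> 'a) \<Rightarrow> ('a \<Rightarrow> 'a) \<Rightarrow> ('a set \<Rightarrow> bool) \<Rightarrow> bool" where
  "checkerboard D \<alpha> \<sigma> red \<longleftrightarrow>
     (\<forall>d\<in>D. red (face_of \<alpha> \<sigma> d) \<noteq> red (face_of \<alpha> \<sigma> (\<alpha> d)))"

text \<open>Face corners at a vertex v correspond bijectively to the darts d at v: the corner
between alpha(d') and sigma(alpha d') = d lies in face_of d.  So the number of incidences of
v with red faces, counted with multiplicity (corners), is the number of darts d at v whose
face is red.\<close>
definition red_incidences :: "('a \<Rightarrow> 'a) \<Rightarrow> ('a \<Rightarrow> 'a) \<Rightarrow> ('a set \<Rightarrow> bool) \<Rightarrow> 'a set \<Rightarrow> nat" where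
  "red_incidences \<alpha> \<sigma> red v = card {d \<in> v. red (face_of \<alpha> \<sigma> d)}"

definition blue_incidences :: "('a \<Rightarrow> 'a) \<Rightarrow> ('a \<Rightarrow> 'a) \<Rightarrow> ('a set \<Rightarrow> bool) \<Rightarrow> 'a set \<Rightarrow> nat" where
  "blue_incidences \<alpha> \<sigma> red v = card {d \<in> v. \<not> red (face_of \<alpha> \<sigma> d)}"

text \<open>A closed walk given as a cyclic list of darts ts (dart ts!i is traversed from its
own vertex to the vertex of alpha (ts!i)).  The transition at the passage from ts!i to ts!(i+1) pairs the
half-edges alpha (ts!i) and ts!(i+1); it is smooth iff they are adjacent in the rotation.\<close>
definition eulerian_circuit :: "'a set \<Rightarrow> ('a \<Rightarrow> 'a) \<Rightarrow> ('a \<Rightarrow> 'a) \<Rightarrow> 'a list \<Rightarrow> bool" where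
  "eulerian_circuit D \<alpha> \<sigma> ts \<longleftrightarrow>
     ts \<noteq> [] \<and> set ts \<subseteq> D \<and>
     distinct (map (edge_of \<alpha>) ts) \<and> set (map (edge_of \<alpha>) ts) = edges D \<alpha> \<and>
     (\<forall>i < length ts. ts ! ((i + 1) mod length ts) \<in> vertex_of \<sigma> (\<alpha> (ts ! i)))"

definition smooth_pair :: "('a \<Rightarrow> 'a) \<Rightarrow> 'a \<Rightarrow> 'a \<Rightarrow> bool" where
  "smooth_pair \<sigma> a b \<longleftrightarrow> \<sigma> a = b \<or> \<sigma> b = a"

definition A_trail :: "'a set \<Rightarrow> ('a \<Rightarrow> 'a) \<Rightarrow> ('a \<Rightarrow> 'a) \<Rightarrow> 'a list \<Rightarrow> bool" where
  "A_trail D \<alpha> \<sigma> ts \<longleftrightarrow> eulerian_circuit D \<alpha> \<sigma> ts \<and>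
     (\<forall>i < length ts. smooth_pair \<sigma> (\<alpha> (ts ! i)) (ts ! ((i + 1) mod length ts)))"

end

theory Submission
  imports Defs "HOL-Combinatorics.Cycles" "HOL-Combinatorics.Orbits"
begin

lemma swapidseq_cycle_of_list:
  "distinct cs \<Longrightarrow> swapidseq (length cs - 1) (cycle_of_list cs)"
proof (induction cs rule: cycle_of_list.induct)
  case (1 i j cs)
  then have "swapidseq (length (j # cs) - 1) (cycle_of_list (j # cs))" by simp
  then have "swapidseq (Suc (length (j # cs) - 1)) (transpose i j \<circ> cycle_of_list (j # cs))"
    using 1(2) by (intro swapidseq.comp_Suc) auto
  then show ?case by (simp add: comp_def)
next
  case "2_1" then show ?case by (simp add: id_def)
next
  case ("2_2" v) then show ?case by (simp add: id_def)
qed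

lemma evenperm_cycle_of_list:
  assumes "distinct cs"
  shows "evenperm (cycle_of_list cs) \<longleftrightarrow> even (length cs - 1)"
  using evenperm_unique[OF swapidseq_cycle_of_list[OF assms] refl] .

lemma sign_orbits:
  assumes "f permutes S" "finite S"
  shows "evenperm f \<longleftrightarrow> even (card S + card (orbit f ` S))"
  using assms(2,1)
proof (induction S arbitrary: f rule: finite_psubset_induct)
  case (psubset S)
  show ?case
  proof (cases "S = {}")
    case True
    then have "f = id" using psubset.prems by (simp add: permutes_empty)
    then show ?thesis using True by simp
  next
    case False
    then obtain s where s: "s \<in> S" by auto
    define A where "A = orbit f s"
    have AS: "A \<subseteq> S" unfolding A_def using psubset.prems s by (rule permutes_orbit_subset)
    have cyc: "cyclic_on f A" unfolding A_def using psubset.prems psubset.hyps(1) by (rule cyclic_on_orbit)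
    have permf: "permutation f" using psubset.prems psubset.hyps(1) permutation_permutes by blast
    have sA: "s \<in> A" unfolding A_def using permf by (rule permutation_self_in_orbit)
    define g where "g = perm_restrict f (S - A)"
    define h where "h = perm_restrict f A"
    have gperm: "g permutes (S - A)" unfolding g_def using psubset.prems cyc by (rule perm_restrict_diff_cyclic)
    have fgh: "g \<circ> h = f" unfolding g_def h_def
      using perm_restrict_comp[of "S - A" A f] cyc AS perm_restrict_id[OF psubset.prems]
      by (metis Diff_disjoint Diff_partition Int_commute Un_commute)
    have finA: "finite A" using AS psubset.hyps(1) finite_subset by blast
    have setsup: "set (support f s) = A"
      unfolding A_def support_set[OF permf] orbit_altdef_permutation[OF permf] by auto
    have hcyc: "h = cycle_of_list (support f s)"
    proof
      fix b
      show "h b = cycle_of_list (support f s) b"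
      proof (cases "b \<in> A")
        case True
        then show ?thesis unfolding h_def perm_restrict_def
          using cycle_restrict[OF permf, of b s] setsup by simp
      next
        case False
        then show ?thesis unfolding h_def perm_restrict_def
          using id_outside_supp[of b "support f s"] setsup by simp
      qed
    qed
    have dist: "distinct (support f s)" using cycle_of_permutation[OF permf] .
    have lenA: "length (support f s) = card A"
      using distinct_card[OF dist] setsup by simp
    have evh: "evenperm h \<longleftrightarrow> even (card A + 1)"
    proof -
      have "card A \<ge> 1" using finA sA by (metis One_nat_def Suc_leI card_gt_0_iff empty_iff)
      then show ?thesis unfolding hcyc evenperm_cycle_of_list[OF dist] lenA by auto
    qed
    have IH: "evenperm g \<longleftrightarrow> even (card (S - A) + card (orbit g ` (S - A)))"
      using psubset.IH[of "S - A" g] gperm sA AS s by blast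
    have og: "orbit g ` (S - A) = orbit f ` (S - A)"
    proof (rule image_cong[OF refl])
      fix x assume x: "x \<in> S - A"
      have "g \<in> (S - A) \<rightarrow> (S - A)" using gperm permutes_in_image by fastforce
      then have "orbit g x = orbit f x"
        using orbit_cong0[of x "S - A" g f] x unfolding g_def perm_restrict_def
        by (metis (no_types, lifting) perm_restrict_def)
      then show "orbit g x = orbit f x" .
    qed
    have of: "orbit f ` S = insert A (orbit f ` (S - A))"
    proof -
      have "orbit f ` A = {A}"
        using sA orbit_cyclic_eq3[OF cyc] by auto
      moreover have "S = A \<union> (S - A)" using AS by auto
      ultimately show ?thesis by (metis image_Un insert_is_Un)
    qed
    have notin: "A \<notin> orbit f ` (S - A)"
    proof
      assume "A \<in> orbit f ` (S - A)"
      then obtain x where "x \<in> S - A" "A = orbit f x" by auto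
      then show False using permutation_self_in_orbit[OF permf, of x] by auto
    qed
    have finO: "finite (orbit f ` (S - A))" using psubset.hyps(1) by simp
    have cardO: "card (orbit f ` S) = Suc (card (orbit f ` (S - A)))"
      unfolding of using notin finO by simp
    have cardS: "card S = card A + card (S - A)"
      using AS finA psubset.hyps(1) by (metis card_Diff_subset card_mono le_add_diff_inverse)
    have permg: "permutation g" using gperm psubset.hyps(1) permutation_permutes by blast
    have permh: "permutation h" unfolding hcyc by (rule permutation_of_cycle)
    have "evenperm f \<longleftrightarrow> (evenperm g \<longleftrightarrow> evenperm h)"
      using evenperm_comp[OF permg permh] fgh by simp
    then show ?thesis unfolding IH evh og cardO cardS by auto
  qed
qed

lemma odd_orbits_even:
  assumes "f permutes S" "finite S" "\<forall>x\<in>S. odd (card (orbit f x))"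
  shows "evenperm f"
proof -
  have permf: "permutation f" using assms(1,2) permutation_permutes by blast
  let ?C = "orbit f ` S"
  have U: "\<Union>?C = S"
  proof
    show "\<Union>?C \<subseteq> S" using permutes_orbit_subset[OF assms(1)] by auto
    show "S \<subseteq> \<Union>?C" using permutation_self_in_orbit[OF permf] by auto
  qed
  have disj: "pairwise disjnt ?C"
  proof (rule pairwiseI)
    fix A B assume "A \<in> ?C" "B \<in> ?C" "A \<noteq> B"
    then obtain x y where xy: "A = orbit f x" "B = orbit f y" by auto
    show "disjnt A B"
    proof (rule ccontr)
      assume "\<not> disjnt A B"
      then obtain z where z1: "z \<in> orbit f x" and z2: "z \<in> orbit f y" using xy by (auto simp: disjnt_def)
      have "orbit f z = orbit f x" by (rule orbit_cyclic_eq3[OF cyclic_on_orbit'[OF permf] z1])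
      moreover have "orbit f z = orbit f y" by (rule orbit_cyclic_eq3[OF cyclic_on_orbit'[OF permf] z2])
      ultimately show False using \<open>A \<noteq> B\<close> xy by simp
    qed
  qed
  have finC: "finite ?C" using assms(2) by simp
  have finA: "\<forall>A\<in>?C. finite A" using U assms(2) by (metis Union_upper finite_subset)
  have cS: "card S = sum card ?C"
  proof -
    have "card (\<Union>?C) = sum card ?C" using disj finA by (intro card_Union_disjoint) auto
    then show ?thesis using U by simp
  qed
  have oddC: "\<forall>A\<in>?C. odd (card A)" using assms(3) by auto
  have par: "even (sum card C) \<longleftrightarrow> even (card C)" if "finite C" "\<forall>A\<in>C. odd (card A)" for C :: "'a set set"
    using that by (induction C rule: finite_induct) auto
  show ?thesis
    using sign_orbits[OF assms(1,2)] cS par[OF finC oddC] by simp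
qed

lemma orb_cong_funpow:
  assumes "\<forall>z\<in>S. f z \<in> S" "\<forall>z\<in>S. f z = h z" "x \<in> S"
  shows "(f ^^ n) x = (h ^^ n) x \<and> (f ^^ n) x \<in> S"
  using assms by (induction n) auto

lemma orb_cong:
  assumes "\<forall>z\<in>S. f z \<in> S" "\<forall>z\<in>S. f z = h z" "x \<in> S"
  shows "orb f x = orb h x"
  using orb_cong_funpow[OF assms] unfolding orb_def by metis

lemma orb_perm:
  assumes "permutation f"
  shows "orb f x = orbit f x"
  unfolding orb_def orbit_altdef_permutation[OF assms] by simp

lemma funpow_sq: "(f \<circ> f) ^^ k = f ^^ (2 * k)"
proof (induction k)
  case 0 show ?case by simp
next
  case (Suc k)
  have "(f \<circ> f) ^^ Suc k = (f \<circ> f) \<circ> (f \<circ> f) ^^ k" by (simp only: funpow.simps)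
  also have "\<dots> = (f \<circ> f) \<circ> f ^^ (2 * k)" by (simp only: Suc)
  also have "\<dots> = f ^^ (Suc (Suc (2 * k)))" by (simp only: funpow.simps comp_assoc)
  also have "Suc (Suc (2 * k)) = 2 * Suc k" by simp
  finally show ?case .
qed

lemma key:
  fixes rs :: "'a list" and P s :: "'a \<Rightarrow> 'a"
  assumes dist: "distinct rs" and ne: "rs \<noteq> []"
    and Pp: "P permutes (set rs)"
    and oddo: "\<forall>y\<in>set rs. odd (card (orb (s \<circ> s) y))"
    and rel: "(\<forall>i<length rs. P (rs!i) = rs!((i+1) mod length rs) \<or> P (rs!i) = s (s (rs!((i+1) mod length rs))))
           \<or> (\<forall>i<length rs. P (rs!((i+1) mod length rs)) = rs!i \<or> P (rs!((i+1) mod length rs)) = s (s (rs!i)))"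
  shows "odd (card (orbit P ` set rs))"
proof -
  define n where "n = length rs"
  define S where "S = set rs"
  define b where "b = cycle_of_list rs"
  have finS: "finite S" unfolding S_def by simp
  have bp: "b permutes S" unfolding b_def S_def by (rule cycle_permutes)
  have bstep: "b (rs!i) = rs!((i+1) mod n)" if "i < n" for i
  proof -
    have "map (b ^^ 1) rs = rotate 1 rs" unfolding b_def using cyclic_rotation[OF dist, of 1] by simp
    then have "map b rs ! i = rotate 1 rs ! i" by simp
    then show ?thesis using that nth_rotate[of i rs 1] unfolding n_def by (simp add: add.commute)
  qed
  have evb: "evenperm b \<longleftrightarrow> even (n - 1)" unfolding b_def n_def by (rule evenperm_cycle_of_list[OF dist])
  have permb: "permutation b" using bp finS permutation_permutes by blast
  have permP: "permutation P" using Pp[folded S_def] finS permutation_permutes by blast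
  obtain p where pp: "p permutes S" and evp: "evenperm p \<longleftrightarrow> even (n - 1)"
    and gx: "\<forall>x\<in>S. P (p x) = x \<or> P (p x) = s (s x)"
    using rel
  proof (elim disjE)
    assume True: "\<forall>i<length rs. P (rs!i) = rs!((i+1) mod length rs) \<or> P (rs!i) = s (s (rs!((i+1) mod length rs)))"
    have fw: "P x = b x \<or> P x = s (s (b x))" if xS: "x \<in> S" for x
    proof -
      obtain i where i: "i < n" "x = rs!i" using xS unfolding S_def n_def by (metis in_set_conv_nth)
      have "P (rs!i) = rs!((i+1) mod n) \<or> P (rs!i) = s (s (rs!((i+1) mod n)))"
        using True[rule_format, of i] i(1) unfolding n_def by simp
      moreover have "b x = rs!((i+1) mod n)" using bstep[OF i(1)] i(2) by simp
      ultimately show ?thesis using i(2) by simp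
    qed
    show ?thesis
    proof (rule that[of "inv b"])
      show "inv b permutes S" using bp by (rule permutes_inv)
      show "evenperm (inv b) \<longleftrightarrow> even (n - 1)" using evenperm_inv[OF permb] evb by simp
      show "\<forall>x\<in>S. P (inv b x) = x \<or> P (inv b x) = s (s x)"
      proof
        fix x assume "x \<in> S"
        then have "inv b x \<in> S" using permutes_in_image[OF permutes_inv[OF bp]] by simp
        moreover have "b (inv b x) = x" using permutes_inverses(1)[OF bp] by simp
        ultimately have "inv b x \<in> S" "b (inv b x) = x" by simp_all
        then show "P (inv b x) = x \<or> P (inv b x) = s (s x)" using fw[of "inv b x"] by simp
      qed
    qed
  next
    assume F: "\<forall>i<length rs. P (rs!((i+1) mod length rs)) = rs!i \<or> P (rs!((i+1) mod length rs)) = s (s (rs!i))"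
    show ?thesis
    proof (rule that[of b])
      show "b permutes S" by (rule bp)
      show "evenperm b \<longleftrightarrow> even (n - 1)" by (rule evb)
      show "\<forall>x\<in>S. P (b x) = x \<or> P (b x) = s (s x)"
      proof
        fix x assume "x \<in> S"
        then obtain i where i: "i < n" "x = rs!i" unfolding S_def n_def by (metis in_set_conv_nth)
        have "P (rs!((i+1) mod n)) = rs!i \<or> P (rs!((i+1) mod n)) = s (s (rs!i))"
          using F[rule_format, of i] i(1) unfolding n_def by simp
        moreover have "b x = rs!((i+1) mod n)" using bstep[OF i(1)] i(2) by simp
        ultimately show "P (b x) = x \<or> P (b x) = s (s x)" using i(2) by simp
      qed
    qed
  qed
  define g where "g = P \<circ> p"
  have gp: "g permutes S" unfolding g_def using pp Pp[folded S_def] by (rule permutes_compose)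
  have permg: "permutation g" using gp finS permutation_permutes by blast
  have gx': "\<forall>x\<in>S. g x = x \<or> g x = s (s x)" using gx unfolding g_def by simp
  have oddg: "\<forall>y\<in>S. odd (card (orbit g y))"
  proof
    fix y assume yS: "y \<in> S"
    show "odd (card (orbit g y))"
    proof (cases "g y = y")
      case True
      then have "orbit g y = {y}" by (simp add: orbit_eq_singleton_iff)
      then show ?thesis by simp
    next
      case False
      have eq: "(g ^^ k) y = ((s \<circ> s) ^^ k) y" for k
      proof (induction k)
        case 0 show ?case by simp
      next
        case (Suc k)
        define z where "z = (g ^^ k) y"
        have zS: "z \<in> S" unfolding z_def using yS gp by (metis permutes_funpow permutes_in_image)
        have "g z \<noteq> z"
        proof
          assume "g z = z"
          then have "(g ^^ k) (g y) = (g ^^ k) y" unfolding z_def by (metis funpow_swap1)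
          moreover have "inj (g ^^ k)" using permutes_funpow[OF gp] permutes_inj by blast
          ultimately show False using False by (meson injD)
        qed
        then have "g z = s (s z)" using gx' zS by blast
        then show ?case using Suc unfolding z_def by simp
      qed
      have "orbit g y = orb (s \<circ> s) y"
        unfolding orb_perm[OF permg, symmetric] orb_def using eq by simp
      then show ?thesis using oddo yS unfolding S_def by simp
    qed
  qed
  have evg: "evenperm g" by (rule odd_orbits_even[OF gp finS oddg])
  have Pg: "P = g \<circ> inv p" unfolding g_def using permutes_inv_o(1)[OF pp] by (simp add: comp_assoc)
  have permip: "permutation (inv p)" using permutes_inv[OF pp] finS permutation_permutes by blast
  have permp: "permutation p" using pp finS permutation_permutes by blast
  have evP: "evenperm P \<longleftrightarrow> even (n - 1)"
    using evenperm_comp[OF permg permip] evenperm_inv[OF permp] evg evp Pg by simp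
  have cS: "card S = n" unfolding S_def n_def using distinct_card[OF dist] .
  have n1: "n \<ge> 1" unfolding n_def using ne by (simp add: Suc_leI)
  have "evenperm P \<longleftrightarrow> even (n + card (orbit P ` S))"
    using sign_orbits[OF Pp[folded S_def] finS] cS by simp
  then have "even (n - 1) \<longleftrightarrow> even (n + card (orbit P ` S))" using evP by simp
  then show ?thesis using n1 unfolding S_def by (cases "even n") auto
qed

theorem mainTheorem5:
  fixes D :: "'a set" and \<alpha> \<sigma> :: "'a \<Rightarrow> 'a" and red :: "'a set \<Rightarrow> bool"
  assumes "torus_map D \<alpha> \<sigma>"
    and "checkerboard D \<alpha> \<sigma> red"
    and "\<forall>v \<in> vertices D \<sigma>. odd (red_incidences \<alpha> \<sigma> red v) \<and> odd (blue_incidences \<alpha> \<sigma> red v)"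
    and "\<exists>ts. A_trail D \<alpha> \<sigma> ts"
  shows "odd (card {F \<in> faces D \<alpha> \<sigma>. red F}) \<or> odd (card {F \<in> faces D \<alpha> \<sigma>. \<not> red F})"
proof -
  define col where "col d = red (face_of \<alpha> \<sigma> d)" for d
  have rsys: "rotation_system D \<alpha> \<sigma>" using assms(1) unfolding torus_map_def by simp
  have finD: "finite D" and aD: "\<forall>d\<in>D. \<alpha> d \<in> D \<and> \<alpha> d \<noteq> d \<and> \<alpha> (\<alpha> d) = d"
    and bs: "bij_betw \<sigma> D D" using rsys unfolding rotation_system_def by auto
  have sD: "\<forall>z\<in>D. \<sigma> z \<in> D" using bs bij_betwE by blast
  have injs: "inj_on \<sigma> D" using bs bij_betw_imp_inj_on by blast
  have inja: "inj_on \<alpha> D" by (rule inj_onI) (metis aD)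
  define \<psi> where "\<psi> x = (if x \<in> D then \<sigma> (\<alpha> x) else x)" for x
  have \<psi>D: "\<forall>z\<in>D. \<psi> z \<in> D" unfolding \<psi>_def using aD sD by simp
  have inj\<psi>: "inj_on \<psi> D"
  proof (rule inj_onI)
    fix x y assume "x \<in> D" "y \<in> D" "\<psi> x = \<psi> y"
    then have "\<sigma> (\<alpha> x) = \<sigma> (\<alpha> y)" unfolding \<psi>_def by simp
    then have "\<alpha> x = \<alpha> y" using injs aD \<open>x \<in> D\<close> \<open>y \<in> D\<close> by (meson inj_onD)
    then show "x = y" using inja \<open>x \<in> D\<close> \<open>y \<in> D\<close> by (meson inj_onD)
  qed
  have \<psi>p: "\<psi> permutes D"
  proof (rule bij_imp_permutes)
    show "bij_betw \<psi> D D" unfolding bij_betw_def using inj\<psi> endo_inj_surj[OF finD _ inj\<psi>] \<psi>D by blast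
    show "\<And>x. x \<notin> D \<Longrightarrow> \<psi> x = x" unfolding \<psi>_def by simp
  qed
  have perm\<psi>: "permutation \<psi>" using \<psi>p finD permutation_permutes by blast
  have face: "face_of \<alpha> \<sigma> d = orbit \<psi> d" if "d \<in> D" for d
  proof -
    have "orb (\<sigma> \<circ> \<alpha>) d = orb \<psi> d"
      by (rule orb_cong[of D]) (use that aD sD in \<open>auto simp: \<psi>_def\<close>)
    then show ?thesis unfolding face_of_def orb_perm[OF perm\<psi>] .
  qed
  have cb: "\<forall>d\<in>D. col (\<alpha> d) \<noteq> col d" using assms(2) unfolding checkerboard_def col_def by auto
  have C1: "col (\<sigma> z) \<noteq> col z" if "z \<in> D" for z
  proof -
    have az: "\<alpha> z \<in> D" using aD that by simp
    have "face_of \<alpha> \<sigma> (\<sigma> z) = orbit \<psi> (\<psi> (\<alpha> z))"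
      using face[of "\<sigma> z"] sD that aD az unfolding \<psi>_def by simp
    also have "\<dots> = orbit \<psi> (\<alpha> z)" by (rule permutation_orbit_step[OF perm\<psi>])
    also have "\<dots> = face_of \<alpha> \<sigma> (\<alpha> z)" using face[OF az] by simp
    finally have "col (\<sigma> z) = col (\<alpha> z)" unfolding col_def by simp
    then show ?thesis using cb that by simp
  qed
  have C2: "(\<sigma> ^^ j) z \<in> D \<and> (col ((\<sigma> ^^ j) z) = (col z = even j))" if "z \<in> D" for z j
  proof (induction j)
    case 0 show ?case using that by simp
  next
    case (Suc j)
    then show ?case using C1[of "(\<sigma> ^^ j) z"] sD by auto
  qed
  have C3: "orb (\<sigma> \<circ> \<sigma>) y = {d \<in> orb \<sigma> y. col d = col y}" if "y \<in> D" for y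
  proof
    show "orb (\<sigma> \<circ> \<sigma>) y \<subseteq> {d \<in> orb \<sigma> y. col d = col y}"
    proof
      fix d assume "d \<in> orb (\<sigma> \<circ> \<sigma>) y"
      then obtain k where "d = ((\<sigma> \<circ> \<sigma>) ^^ k) y" unfolding orb_def by auto
      moreover have "(\<sigma> \<circ> \<sigma>) ^^ k = \<sigma> ^^ (2 * k)"
        by (rule funpow_sq)
      ultimately have "d = (\<sigma> ^^ (2 * k)) y" by simp
      then show "d \<in> {d \<in> orb \<sigma> y. col d = col y}" using C2[OF that, of "2 * k"] unfolding orb_def by auto
    qed
    show "{d \<in> orb \<sigma> y. col d = col y} \<subseteq> orb (\<sigma> \<circ> \<sigma>) y"
    proof
      fix d assume d: "d \<in> {d \<in> orb \<sigma> y. col d = col y}"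
      then obtain j where j: "d = (\<sigma> ^^ j) y" unfolding orb_def by auto
      then have "even j" using C2[OF that, of j] d by auto
      then obtain k where "j = 2 * k" by auto
      moreover have "(\<sigma> \<circ> \<sigma>) ^^ k = \<sigma> ^^ (2 * k)"
        by (rule funpow_sq)
      ultimately have "d = ((\<sigma> \<circ> \<sigma>) ^^ k) y" using j by simp
      then show "d \<in> orb (\<sigma> \<circ> \<sigma>) y" unfolding orb_def by blast
    qed
  qed
  have oddv: "odd (card (orb (\<sigma> \<circ> \<sigma>) y))" if "y \<in> D" "col y" for y
  proof -
    have "vertex_of \<sigma> y \<in> vertices D \<sigma>" unfolding vertices_def using that by simp
    then have "odd (red_incidences \<alpha> \<sigma> red (vertex_of \<sigma> y))" using assms(3) by simp
    moreover have "red_incidences \<alpha> \<sigma> red (vertex_of \<sigma> y) = card (orb (\<sigma> \<circ> \<sigma>) y)"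
      unfolding red_incidences_def vertex_of_def C3[OF that(1)] using that(2) unfolding col_def by simp
    ultimately show ?thesis by simp
  qed
  define Dr where "Dr = {d \<in> D. col d}"
  define P where "P x = (if x \<in> Dr then \<sigma> (\<alpha> x) else x)" for x
  have PDr: "\<forall>z\<in>Dr. P z \<in> Dr"
  proof
    fix z assume z: "z \<in> Dr"
    then have zD: "z \<in> D" "col z" unfolding Dr_def by auto
    have "col (\<sigma> (\<alpha> z)) \<noteq> col (\<alpha> z)" using C1 aD zD by simp
    then have "col (\<sigma> (\<alpha> z))" using cb zD by auto
    then show "P z \<in> Dr" unfolding P_def Dr_def using z zD aD sD by simp
  qed
  have Pp: "P permutes Dr"
  proof (rule bij_imp_permutes)
    have finDr: "finite Dr" unfolding Dr_def using finD by simp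
    have injP: "inj_on P Dr"
      using inj\<psi> unfolding inj_on_def P_def \<psi>_def Dr_def by auto
    show "bij_betw P Dr Dr" unfolding bij_betw_def using injP endo_inj_surj[OF finDr _ injP] PDr by blast
    show "\<And>x. x \<notin> Dr \<Longrightarrow> P x = x" unfolding P_def by simp
  qed
  have finDr: "finite Dr" unfolding Dr_def using finD by simp
  have permP: "permutation P" using Pp finDr permutation_permutes by blast
  have orbitsP: "orbit P ` Dr = {F \<in> faces D \<alpha> \<sigma>. red F}"
  proof -
    have eq: "orbit P x = face_of \<alpha> \<sigma> x" if "x \<in> Dr" for x
    proof -
      have "orb P x = orb (\<sigma> \<circ> \<alpha>) x"
        by (rule orb_cong[of Dr]) (use that PDr in \<open>auto simp: P_def\<close>)
      then show ?thesis unfolding face_of_def orb_perm[OF permP] .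
    qed
    show ?thesis
    proof
      show "orbit P ` Dr \<subseteq> {F \<in> faces D \<alpha> \<sigma>. red F}"
        using eq unfolding faces_def Dr_def col_def by auto
      show "{F \<in> faces D \<alpha> \<sigma>. red F} \<subseteq> orbit P ` Dr"
      proof
        fix F assume "F \<in> {F \<in> faces D \<alpha> \<sigma>. red F}"
        then obtain d where "d \<in> D" "F = face_of \<alpha> \<sigma> d" "red F" unfolding faces_def by auto
        then have "d \<in> Dr" "F = orbit P d" using eq unfolding Dr_def col_def by auto
        then show "F \<in> orbit P ` Dr" by simp
      qed
    qed
  qed
  obtain ts where A: "A_trail D \<alpha> \<sigma> ts" using assms(4) by blast
  define n where "n = length ts"
  have ne: "ts \<noteq> []" and tsD: "set ts \<subseteq> D" and de: "distinct (map (edge_of \<alpha>) ts)"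
    and ce: "set (map (edge_of \<alpha>) ts) = edges D \<alpha>"
    and tr: "\<forall>i<n. \<sigma> (\<alpha> (ts!i)) = ts!((i+1) mod n) \<or> \<sigma> (ts!((i+1) mod n)) = \<alpha> (ts!i)"
    using A unfolding A_trail_def eulerian_circuit_def smooth_pair_def n_def by auto
  have n0: "0 < n" using ne unfolding n_def by simp
  have tD: "ts!i \<in> D" if "i < n" for i using tsD that unfolding n_def by auto
  have dts: "distinct ts" using de by (simp add: distinct_map)
  have T2: "col (ts!((i+1) mod n)) = col (ts!i)" if "i < n" for i
  proof -
    have a: "\<alpha> (ts!i) \<in> D" "ts!((i+1) mod n) \<in> D" using tD aD that n0 by auto
    have c1: "col (\<sigma> (\<alpha> (ts!i))) \<noteq> col (\<alpha> (ts!i))" using C1[OF a(1)] .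
    have c2: "col (\<sigma> (ts!((i+1) mod n))) \<noteq> col (ts!((i+1) mod n))" using C1[OF a(2)] .
    have c3: "col (\<alpha> (ts!i)) \<noteq> col (ts!i)" using cb tD[OF that] by blast
    from tr that have "\<sigma> (\<alpha> (ts!i)) = ts!((i+1) mod n) \<or> \<sigma> (ts!((i+1) mod n)) = \<alpha> (ts!i)" by blast
    then show ?thesis
    proof
      assume "\<sigma> (\<alpha> (ts!i)) = ts!((i+1) mod n)"
      then show ?thesis using c1 c3 by auto
    next
      assume "\<sigma> (ts!((i+1) mod n)) = \<alpha> (ts!i)"
      then show ?thesis using c2 c3 by auto
    qed
  qed
  have T2': "i < n \<Longrightarrow> col (ts!i) = col (ts!0)" for i
  proof (induction i)
    case 0 then show ?case by simp
  next
    case (Suc i)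
    then have i: "i < n" by simp
    have "col (ts!((i+1) mod n)) = col (ts!i)" using T2[OF i] .
    moreover have "(i+1) mod n = Suc i" using Suc.prems by simp
    ultimately show ?case using Suc.IH[OF i] by simp
  qed
  have T3: "\<exists>j<n. d = ts!j \<or> d = \<alpha> (ts!j)" if "d \<in> D" for d
  proof -
    have "edge_of \<alpha> d \<in> set (map (edge_of \<alpha>) ts)" using ce that unfolding edges_def by simp
    then obtain j where "j < n" "edge_of \<alpha> d = edge_of \<alpha> (ts!j)"
      unfolding n_def by (metis in_set_conv_nth length_map nth_map)
    then show ?thesis unfolding edge_of_def by blast
  qed
  have main: "odd (card (orbit P ` Dr))"
  proof (cases "col (ts!0)")
    case True
    have setDr: "set ts = Dr"
    proof
      show "set ts \<subseteq> Dr"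
      proof
        fix x assume "x \<in> set ts"
        then obtain i where i: "i < n" "x = ts!i" unfolding n_def by (metis in_set_conv_nth)
        then show "x \<in> Dr" unfolding Dr_def using tD[OF i(1)] T2'[OF i(1)] True by simp
      qed
      show "Dr \<subseteq> set ts"
      proof
        fix d assume "d \<in> Dr"
        then have d: "d \<in> D" "col d" unfolding Dr_def by auto
        then obtain j where j: "j < n" "d = ts!j \<or> d = \<alpha> (ts!j)" using T3 by blast
        have "d \<noteq> \<alpha> (ts!j)" using cb tD[OF j(1)] T2'[OF j(1)] True d(2) by auto
        then show "d \<in> set ts" using j unfolding n_def by auto
      qed
    qed
    have rel: "\<forall>i<length ts. P (ts!i) = ts!((i+1) mod length ts) \<or> P (ts!i) = \<sigma> (\<sigma> (ts!((i+1) mod length ts)))"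
    proof (intro allI impI)
      fix i assume i: "i < length ts"
      have "ts!i \<in> Dr" using setDr i by auto
      then have Pe: "P (ts!i) = \<sigma> (\<alpha> (ts!i))" unfolding P_def by simp
      from tr i have "\<sigma> (\<alpha> (ts!i)) = ts!((i+1) mod n) \<or> \<sigma> (ts!((i+1) mod n)) = \<alpha> (ts!i)"
        unfolding n_def by blast
      then show "P (ts!i) = ts!((i+1) mod length ts) \<or> P (ts!i) = \<sigma> (\<sigma> (ts!((i+1) mod length ts)))"
        unfolding Pe n_def by auto
    qed
    have oddo: "\<forall>y\<in>set ts. odd (card (orb (\<sigma> \<circ> \<sigma>) y))"
      using oddv setDr unfolding Dr_def by blast
    have "odd (card (orbit P ` set ts))"
      using key[OF dts ne, of P \<sigma>] Pp oddo rel unfolding setDr by blast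
    then show ?thesis unfolding setDr .
  next
    case False
    define rs where "rs = map \<alpha> ts"
    have setDr: "set rs = Dr"
    proof
      show "set rs \<subseteq> Dr" unfolding Dr_def rs_def
      proof
        fix x assume "x \<in> set (map \<alpha> ts)"
        then obtain i where i: "i < n" "x = \<alpha> (ts!i)" unfolding n_def by (auto simp: in_set_conv_nth)
        then show "x \<in> {d \<in> D. col d}" using tD[OF i(1)] aD cb T2'[OF i(1)] False by auto
      qed
      show "Dr \<subseteq> set rs"
      proof
        fix d assume "d \<in> Dr"
        then have d: "d \<in> D" "col d" unfolding Dr_def by auto
        then obtain j where j: "j < n" "d = ts!j \<or> d = \<alpha> (ts!j)" using T3 by blast
        have "d \<noteq> ts!j" using T2'[OF j(1)] False d(2) by auto
        then show "d \<in> set rs" using j unfolding n_def rs_def by auto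
      qed
    qed
    have drs: "distinct rs" unfolding rs_def using dts inja tsD by (simp add: distinct_map inj_on_subset)
    have ners: "rs \<noteq> []" unfolding rs_def using ne by simp
    have lrs: "length rs = n" unfolding rs_def n_def by simp
    have rel: "\<forall>i<length rs. P (rs!((i+1) mod length rs)) = rs!i \<or> P (rs!((i+1) mod length rs)) = \<sigma> (\<sigma> (rs!i))"
    proof (intro allI impI)
      fix i assume i: "i < length rs"
      then have i': "i < n" using lrs by simp
      have m: "(i+1) mod n < n" using n0 by simp
      have in1: "rs!((i+1) mod n) \<in> Dr" using setDr m lrs by (metis nth_mem)
      have "P (rs!((i+1) mod n)) = \<sigma> (ts!((i+1) mod n))"
        using in1 tD[OF m] aD unfolding P_def rs_def using m n_def by simp
      moreover from tr i' have "\<sigma> (\<alpha> (ts!i)) = ts!((i+1) mod n) \<or> \<sigma> (ts!((i+1) mod n)) = \<alpha> (ts!i)"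
        by blast
      moreover have "rs!i = \<alpha> (ts!i)" unfolding rs_def using i' n_def by simp
      ultimately show "P (rs!((i+1) mod length rs)) = rs!i \<or> P (rs!((i+1) mod length rs)) = \<sigma> (\<sigma> (rs!i))"
        unfolding lrs by auto
    qed
    have oddo: "\<forall>y\<in>set rs. odd (card (orb (\<sigma> \<circ> \<sigma>) y))"
      using oddv setDr unfolding Dr_def by blast
    have "odd (card (orbit P ` set rs))"
      using key[OF drs ners, of P \<sigma>] Pp oddo rel unfolding setDr by blast
    then show ?thesis unfolding setDr .
  qed
  show ?thesis using main orbitsP by simp
qed

end
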